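(* Let $f\in\mathcal{E}$ have infinite order and suppose $d(f^n)$ is bounded independently of $n$. Then there exists $N\in\mathbb{N}$ such that $d(f^{nN})$ is the same for all $n\in\mathbb{N}$.
   Context: Identify $\mathbb{T}^1=\mathbb{R}/\mathbb{Z}$ with $[0,1)$. An interval exchange transformation is a bijection of $\mathbb{T}^1$ that is a translation on each piece of some partition of $[0,1)$ into finitely many half-open intervals $[a,b)$; $\mathcal{E}$ is the group of these. $d(g)$ is the number of points at which $g$ is discontinuous as a map of the circle $\mathbb{T}^1$ with its standard topology. *)

theory Defs
  imports "HOL-Analysis.Analysis"
begin

text \<open>T^1 = R/Z is identified with [0,1). An interval exchange transformation is
  a bijection of [0,1) which is a translation on each piece of a finite partition of
  [0,1) into half-open intervals [a,b). Values of g outside [0,1) are irrelevant.\<close>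

definition iet :: "(real \<Rightarrow> real) \<Rightarrow> bool" where
  "iet g \<longleftrightarrow> bij_betw g {0..<1} {0..<1} \<and>
     (\<exists>P. finite P \<and> pairwise disjnt P \<and> \<Union>P = {0..<1} \<and>
          (\<forall>I\<in>P. \<exists>a b. 0 \<le> a \<and> a < b \<and> b \<le> 1 \<and> I = {a..<b}) \<and>
          (\<forall>I\<in>P. \<exists>c. \<forall>x\<in>I. g x = x + c))"

text \<open>Continuity of g at the point [x] of the circle: the lift
  t \<mapsto> exp(2 pi i g(frac t)) of g, composed with the covering maps, is continuous at x.\<close>

definition circle_cont_at :: "(real \<Rightarrow> real) \<Rightarrow> real \<Rightarrow> bool" where
  "circle_cont_at g x \<longleftrightarrow> isCont (\<lambda>t. cis (2 * pi * g (frac t))) x"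

definition disc_count :: "(real \<Rightarrow> real) \<Rightarrow> nat" where
  "disc_count g = card {x \<in> {0..<1}. \<not> circle_cont_at g x}"

definition infinite_order :: "(real \<Rightarrow> real) \<Rightarrow> bool" where
  "infinite_order f \<longleftrightarrow> (\<forall>n::nat. n \<ge> 1 \<longrightarrow> (\<exists>x\<in>{0..<1}. (f ^^ n) x \<noteq> x))"

end

theory Submission
  imports Defs
begin


definition evper :: "(nat \<Rightarrow> 'b) \<Rightarrow> bool" where
  "evper s \<longleftrightarrow> (\<exists>M p. p \<ge> 1 \<and> (\<forall>m\<ge>M. s (m + p) = s m))"

lemma evper_mult:
  fixes k :: nat
  assumes "\<forall>m\<ge>M. s (m + p) = s m" "m \<ge> M"
  shows "s (m + k * p) = s m"
proof (induction k)
  case 0 then show ?case by simp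
next
  case (Suc k)
  have "M \<le> m + k * p" using assms(2) by simp
  then have "s (m + k * p + p) = s (m + k*p)" using assms(1) by blast
  moreover have "m + Suc k * p = m + k * p + p" by simp
  ultimately show ?case using Suc by metis
qed

lemma evper_combine:
  assumes "evper s" "evper t"
  shows "evper (\<lambda>m. h (s m) (t m))"
proof -
  obtain M1 p1 where 1: "p1 \<ge> 1" "\<forall>m\<ge>M1. s (m + p1) = s m" using assms(1) evper_def by blast
  obtain M2 p2 where 2: "p2 \<ge> 1" "\<forall>m\<ge>M2. t (m + p2) = t m" using assms(2) evper_def by blast
  have "\<forall>m\<ge>max M1 M2. h (s (m + p2*p1)) (t (m + p1*p2)) = h (s m) (t m)"
    using evper_mult[OF 1(2)] evper_mult[OF 2(2)] by simp
  moreover have "p1 * p2 \<ge> 1" using 1(1) 2(1) by simp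
  ultimately show ?thesis unfolding evper_def by (metis mult.commute)
qed

lemma evper_const: "evper (\<lambda>m. c)"
  unfolding evper_def by auto

lemma evper_sum:
  assumes "finite D" "\<forall>z\<in>D. evper (f z)"
  shows "evper (\<lambda>m. \<Sum>z\<in>D. (f z m :: nat))"
  using assms
proof (induction D rule: finite_induct)
  case empty then show ?case by (simp add: evper_const)
next
  case (insert x F)
  then have "evper (\<lambda>m. (f x m) + (\<Sum>z\<in>F. f z m))"
    using evper_combine[of "f x" "\<lambda>m. \<Sum>z\<in>F. f z m" "(+)"] by auto
  then show ?case using insert by simp
qed

lemma evper_final:
  assumes "evper c"
  shows "\<exists>N::nat. N \<ge> 1 \<and> (\<forall>n\<ge>1. c (n * N) = c N)"
proof -
  obtain M p where 1: "p \<ge> 1" "\<forall>m\<ge>M. c (m + p) = c m" using assms evper_def by blast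
  define N where "N = p * (M + 1)"
  have N1: "N \<ge> 1" using 1(1) by (simp add: N_def)
  have "M + 1 \<le> p * (M + 1)" using mult_le_mono1[OF 1(1), of "M+1"] by simp
  then have NM: "N \<ge> M" unfolding N_def by linarith
  have "c (n * N) = c N" if "n \<ge> 1" for n
  proof -
    define k where "k = n - 1"
    have k: "n = Suc k" using that unfolding k_def by simp
    have "n * N = N + (k * (M + 1)) * p" unfolding k N_def by (simp add: algebra_simps)
    then show ?thesis using evper_mult[OF 1(2) NM] by simp
  qed
  then show ?thesis using N1 by blast
qed

lemma evconst:
  fixes s :: "nat \<Rightarrow> nat"
  assumes mono: "\<forall>m. s m \<le> s (Suc m)" and bd: "\<forall>m. s m \<le> B"
  shows "\<exists>M. \<forall>m\<ge>M. s m = s M"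
proof -
  have fin: "finite (range s)" using bd by (metis finite_atMost finite_subset image_subsetI atMost_iff)
  have "Max (range s) \<in> range s" using fin by (intro Max_in) auto
  then obtain M where M: "s M = Max (range s)" by auto
  have "s m = s M" if "m \<ge> M" for m
  proof -
    have "s M \<le> s m" using lift_Suc_mono_le[of s, OF _ that] mono by blast
    moreover have "s m \<le> s M" unfolding M using fin by (intro Max_ge) auto
    ultimately show ?thesis by simp
  qed
  then show ?thesis by blast
qed

lemma funpow_in: "F ` S \<subseteq> S \<Longrightarrow> x \<in> S \<Longrightarrow> (F ^^ n) x \<in> S"
  by (induction n) auto

lemma inj_funpow: "inj_on R S \<Longrightarrow> R ` S \<subseteq> S \<Longrightarrow> inj_on (R ^^ n) S"
proof (induction n)
  case 0 then show ?case by simp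
next
  case (Suc n)
  have "inj_on (R ^^ n \<circ> R) S" using Suc by (intro comp_inj_on) (auto intro: inj_on_subset)
  then show ?case by (simp only: funpow_Suc_right)
qed

lemma agree:
  assumes RS: "R ` S \<subseteq> S" and x: "x \<in> S"
    and ag: "\<forall>i<k. (R ^^ i) x \<notin> {y\<in>S. L y \<noteq> R y}"
  shows "(L ^^ k) x = (R ^^ k) x"
  using ag
proof (induction k)
  case 0 then show ?case by simp
next
  case (Suc k)
  then have IH: "(L ^^ k) x = (R ^^ k) x" by simp
  have "(R ^^ k) x \<in> S" using funpow_in[OF RS x] .
  moreover have "(R ^^ k) x \<notin> {y\<in>S. L y \<noteq> R y}" using Suc.prems by simp
  ultimately have "L ((R ^^ k) x) = R ((R ^^ k) x)" by blast
  then show ?case using IH by simp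
qed

lemma orbit_step:
  fixes F :: "'a \<Rightarrow> 'a"
  assumes "(F ^^ a) z = (F ^^ b) z" "a < b" "i \<ge> a"
  shows "(F ^^ (i + (b - a))) z = (F ^^ i) z"
proof -
  have e1: "i + (b - a) = (i - a) + b" using assms by simp
  have e2: "i = (i - a) + a" using assms by simp
  have "(F ^^ (i + (b - a))) z = (F ^^ (i - a)) ((F ^^ b) z)"
    by (simp only: e1 funpow_add comp_apply)
  also have "\<dots> = (F ^^ (i - a)) ((F ^^ a) z)" using assms by simp
  also have "\<dots> = (F ^^ ((i - a) + a)) z" by (simp only: funpow_add comp_apply)
  also have "\<dots> = (F ^^ i) z" using e2 by simp
  finally show ?thesis .
qed

lemma orbit_per:
  fixes k :: nat and F :: "'a \<Rightarrow> 'a"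
  assumes "(F ^^ a) z = (F ^^ b) z" "a < b" "j \<ge> a"
  shows "(F ^^ (j + k * (b - a))) z = (F ^^ j) z"
proof (induction k)
  case 0 then show ?case by simp
next
  case (Suc k)
  have "(F ^^ (j + k * (b - a) + (b - a))) z = (F ^^ (j + k * (b - a))) z"
    using orbit_step[OF assms(1,2)] assms(3) by simp
  moreover have "j + Suc k * (b - a) = j + k * (b - a) + (b - a)" by simp
  ultimately show ?case using Suc by metis
qed

lemma orbit_fin:
  fixes F :: "'a \<Rightarrow> 'a"
  assumes "(F ^^ a) z = (F ^^ b) z" "a < b"
  shows "(F ^^ j) z \<in> (\<lambda>j. (F ^^ j) z) ` {..<b}"
proof (cases "j < b")
  case True then show ?thesis by auto
next
  case False
  define j' where "j' = a + (j - a) mod (b - a)"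
  have "j = j' + ((j - a) div (b - a)) * (b - a)" using False assms(2) unfolding j'_def
    by (metis add.assoc add.commute div_mult_mod_eq le_add_diff_inverse less_imp_le_nat not_less order.strict_trans2)
  moreover have "j' \<ge> a" unfolding j'_def by simp
  moreover have "j' < b" unfolding j'_def using assms(2)
    by (metis add_diff_inverse_nat add_less_cancel_left diff_less_mono2 less_imp_le_nat mod_less_divisor not_less_eq_eq zero_less_diff diff_is_0_eq order.asym)
  ultimately show ?thesis using orbit_per[OF assms, of j' "(j - a) div (b - a)"] by (metis imageI lessThan_iff)
qed

lemma noninj_nat:
  fixes g :: "nat \<Rightarrow> 'a"
  assumes "\<not> inj g" shows "\<exists>a b. a < b \<and> g a = g b"
proof -
  obtain x y where "g x = g y" "x \<noteq> y" using assms unfolding inj_def by blast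
  then show ?thesis by (metis linorder_neqE_nat)
qed

lemma bounded_eventually:
  fixes N :: "nat set"
  assumes "finite N" shows "\<exists>J. \<forall>j\<ge>J. j \<notin> N"
  using assms by (metis finite_nat_set_iff_bounded not_less)

lemma funpow_split:
  fixes F :: "'a \<Rightarrow> 'a"
  assumes "k \<le> m" shows "(F ^^ m) x = (F ^^ (m - k)) ((F ^^ k) x)"
proof -
  have "m = (m - k) + k" using assms by simp
  then show ?thesis by (metis funpow_add comp_apply)
qed

lemma evperI: "p \<ge> 1 \<Longrightarrow> \<forall>m\<ge>M. s (m + p) = s m \<Longrightarrow> evper s"
  unfolding evper_def by blast

lemma e_evper:
  assumes LS: "L ` S \<subseteq> S" and RS: "R ` S \<subseteq> S" and inj: "inj_on R S"
    and fin: "finite {y\<in>S. L y \<noteq> R y}" and z: "z \<in> S"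
  shows "evper (\<lambda>j. (L ^^ j) z \<noteq> (R ^^ j) z)"
proof (cases "inj (\<lambda>j. (L ^^ j) z)")
  case True
  define D where "D = {y\<in>S. L y \<noteq> R y}"
  have fv: "finite ((\<lambda>j. (L ^^ j) z) -` D)" unfolding D_def by (rule finite_vimageI[OF fin True])
  obtain J where J0: "\<forall>j\<ge>J. j \<notin> (\<lambda>j. (L ^^ j) z) -` D" using bounded_eventually[OF fv] by blast
  have J: "\<forall>j\<ge>J. (L ^^ j) z \<notin> D" using J0 by simp
  define w where "w = (L ^^ J) z"
  have wS: "w \<in> S" unfolding w_def using funpow_in[OF LS z] .
  have LR: "(L ^^ (i + J)) z = (R ^^ i) w" for i
  proof (induction i)
    case 0 then show ?case by (simp add: w_def)
  next
    case (Suc i)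
    have "(L ^^ (i + J)) z \<in> S" using funpow_in[OF LS z] .
    moreover have "(L ^^ (i + J)) z \<notin> D" using J by simp
    ultimately have "L ((L ^^ (i + J)) z) = R ((L ^^ (i + J)) z)" unfolding D_def by blast
    then show ?case using Suc by simp
  qed
  have eqJ: "(L ^^ j) z \<noteq> (R ^^ j) z \<longleftrightarrow> w \<noteq> (R ^^ J) z" if "j \<ge> J" for j
  proof -
    have "(L ^^ j) z = (R ^^ (j - J)) w" using LR[of "j - J"] that by simp
    moreover have "(R ^^ j) z = (R ^^ (j - J)) ((R ^^ J) z)"
      using funpow_split[OF that] .
    moreover have "(R ^^ (j - J)) w = (R ^^ (j - J)) ((R ^^ J) z) \<longleftrightarrow> w = (R ^^ J) z"
      using inj_on_eq_iff[OF inj_funpow[OF inj RS] wS funpow_in[OF RS z]] .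
    ultimately show ?thesis by simp
  qed
  have "\<forall>m\<ge>J. ((L ^^ (m + 1)) z \<noteq> (R ^^ (m + 1)) z) = ((L ^^ m) z \<noteq> (R ^^ m) z)"
  proof (intro allI impI)
    fix m assume m: "m \<ge> J"
    have a: "(L ^^ (m + 1)) z \<noteq> (R ^^ (m + 1)) z \<longleftrightarrow> w \<noteq> (R ^^ J) z" by (rule eqJ) (use m in simp)
    have b: "(L ^^ m) z \<noteq> (R ^^ m) z \<longleftrightarrow> w \<noteq> (R ^^ J) z" by (rule eqJ) (use m in simp)
    show "((L ^^ (m + 1)) z \<noteq> (R ^^ (m + 1)) z) = ((L ^^ m) z \<noteq> (R ^^ m) z)"
      using a b by blast
  qed
  then show ?thesis by (rule evperI[rotated]) simp
next
  case False
  then obtain a b where ab: "a < b" "(L ^^ a) z = (L ^^ b) z" using noninj_nat by blast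
  show ?thesis
  proof (cases "inj (\<lambda>j. (R ^^ j) z)")
    case True
    define V where "V = (\<lambda>j. (L ^^ j) z) ` {..<b}"
    have "finite ((\<lambda>j. (R ^^ j) z) -` V)" using finite_vimageI[OF _ True] unfolding V_def by simp
    then obtain J where J0: "\<forall>j\<ge>J. j \<notin> (\<lambda>j. (R ^^ j) z) -` V" using bounded_eventually by blast
    have J: "\<forall>j\<ge>J. (R ^^ j) z \<notin> V" using J0 by simp
    have "\<forall>j. (L ^^ j) z \<in> V" unfolding V_def using orbit_fin[OF ab(2,1)] by blast
    then have "\<forall>m\<ge>J. ((L ^^ (m + 1)) z \<noteq> (R ^^ (m + 1)) z) = ((L ^^ m) z \<noteq> (R ^^ m) z)"
    proof (intro allI impI)
      fix m assume m: "m \<ge> J" and LV: "\<forall>j. (L ^^ j) z \<in> V"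
      have "(R ^^ (m+1)) z \<notin> V" by (rule J[rule_format]) (use m in simp)
      moreover have "(R ^^ m) z \<notin> V" by (rule J[rule_format]) (use m in simp)
      ultimately
      show "((L ^^ (m + 1)) z \<noteq> (R ^^ (m + 1)) z) = ((L ^^ m) z \<noteq> (R ^^ m) z)"
        using LV by metis
    qed
    then show ?thesis by (rule evperI[rotated]) simp
  next
    case False
    then obtain a' b' where ab': "a' < b'" "(R ^^ a') z = (R ^^ b') z" using noninj_nat by blast
    define p where "p = (b - a) * (b' - a')"
    have p1: "p \<ge> 1" unfolding p_def using ab(1) ab'(1) by (simp add: Suc_le_eq)
    have "\<forall>m\<ge>max a a'. ((L ^^ (m + p)) z \<noteq> (R ^^ (m + p)) z) = ((L ^^ m) z \<noteq> (R ^^ m) z)"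
    proof (intro allI impI)
      fix m assume m: "m \<ge> max a a'"
      have "(L ^^ (m + (b' - a') * (b - a))) z = (L ^^ m) z"
        using orbit_per[OF ab(2,1), of m "b' - a'"] m by simp
      moreover have "(R ^^ (m + (b - a) * (b' - a'))) z = (R ^^ m) z"
        using orbit_per[OF ab'(2,1), of m "b - a"] m by simp
      ultimately show "((L ^^ (m + p)) z \<noteq> (R ^^ (m + p)) z) = ((L ^^ m) z \<noteq> (R ^^ m) z)"
        unfolding p_def by (metis mult.commute)
    qed
    then show ?thesis using p1 by (rule evperI[rotated])
  qed
qed

lemma count_formula:
  assumes LS: "L ` S \<subseteq> S" and RS: "R ` S \<subseteq> S" and inj: "inj_on R S"
    and D_def: "D = {y\<in>S. L y \<noteq> R y}" and fin: "finite D"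
  shows "card {x\<in>S. (L ^^ m) x \<noteq> (R ^^ m) x} =
     (\<Sum>z\<in>D. card {k. (\<exists>x\<in>S. (R ^^ k) x = z \<and> (\<forall>i<k. (R ^^ i) x \<notin> D)) \<and> k < m \<and>
              (L ^^ (m - k)) z \<noteq> (R ^^ (m - k)) z})"
proof -
  define A where "A = {x\<in>S. (L ^^ m) x \<noteq> (R ^^ m) x}"
  define K where "K z = {k. (\<exists>x\<in>S. (R ^^ k) x = z \<and> (\<forall>i<k. (R ^^ i) x \<notin> D)) \<and> k < m \<and>
              (L ^^ (m - k)) z \<noteq> (R ^^ (m - k)) z}" for z
  define fh where "fh x = (LEAST k. (R ^^ k) x \<in> D)" for x
  define h where "h x = ((R ^^ fh x) x, fh x)" for x
  have split: "(F ^^ m) x = (F ^^ (m - k)) ((F ^^ k) x)" if "k \<le> m" for F :: "'a \<Rightarrow> 'a" and x k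
  proof -
    have "m = (m - k) + k" using that by simp
    then show ?thesis by (metis funpow_add comp_apply)
  qed
  have key: "fh x < m \<and> (R ^^ fh x) x \<in> D \<and> (\<forall>i<fh x. (R ^^ i) x \<notin> D) \<and> (L ^^ fh x) x = (R ^^ fh x) x"
    if x: "x \<in> A" for x
  proof -
    have xS: "x \<in> S" using x A_def by simp
    have "\<exists>k<m. (R ^^ k) x \<in> D"
    proof (rule ccontr)
      assume "\<not> ?thesis"
      then have "(L ^^ m) x = (R ^^ m) x" using agree[OF RS xS, of m L, folded D_def] by simp
      then show False using x A_def by simp
    qed
    then obtain k0 where k0: "k0 < m" "(R ^^ k0) x \<in> D" by blast
    have 1: "(R ^^ fh x) x \<in> D" unfolding fh_def using k0(2) by (rule LeastI)
    have 2: "fh x \<le> k0" unfolding fh_def using k0(2) by (rule Least_le)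
    have 3: "\<forall>i<fh x. (R ^^ i) x \<notin> D" unfolding fh_def using not_less_Least by blast
    have 4: "(L ^^ fh x) x = (R ^^ fh x) x" using agree[OF RS xS, of "fh x" L, folded D_def] 3 by simp
    show ?thesis using 1 2 3 4 k0(1) by simp
  qed
  have "bij_betw h A (Sigma D K)"
  proof (rule bij_betw_imageI)
    show "inj_on h A"
    proof (rule inj_onI)
      fix x y assume x: "x \<in> A" and y: "y \<in> A" and e: "h x = h y"
      then have "fh x = fh y" "(R ^^ fh x) x = (R ^^ fh x) y" unfolding h_def by auto
      moreover have "x \<in> S" "y \<in> S" using x y A_def by auto
      ultimately show "x = y" using inj_on_eq_iff[OF inj_funpow[OF inj RS]] by metis
    qed
    show "h ` A = Sigma D K"
    proof
      show "h ` A \<subseteq> Sigma D K"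
      proof
        fix p assume "p \<in> h ` A"
        then obtain x where x: "x \<in> A" and p: "p = h x" by blast
        note kx = key[OF x]
        have xS: "x \<in> S" using x A_def by simp
        define z where "z = (R ^^ fh x) x"
        have "(L ^^ m) x = (L ^^ (m - fh x)) z" using split[of "fh x" L x] kx unfolding z_def by simp
        moreover have "(R ^^ m) x = (R ^^ (m - fh x)) z" using split[of "fh x" R x] kx unfolding z_def by simp
        ultimately have "(L ^^ (m - fh x)) z \<noteq> (R ^^ (m - fh x)) z" using x A_def by simp
        then have "fh x \<in> K z" unfolding K_def using kx xS z_def by blast
        then show "p \<in> Sigma D K" using p kx unfolding h_def z_def by simp
      qed
      show "Sigma D K \<subseteq> h ` A"
      proof
        fix p assume "p \<in> Sigma D K"
        then obtain z k where p: "p = (z, k)" and z: "z \<in> D" and k: "k \<in> K z" by blast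
        then obtain x where xS: "x \<in> S" and xz: "(R ^^ k) x = z" and xi: "\<forall>i<k. (R ^^ i) x \<notin> D"
          and km: "k < m" and ez: "(L ^^ (m - k)) z \<noteq> (R ^^ (m - k)) z" unfolding K_def by blast
        have fk: "fh x = k" unfolding fh_def
        proof (rule Least_equality)
          show "(R ^^ k) x \<in> D" using xz z by simp
          show "\<And>y. (R ^^ y) x \<in> D \<Longrightarrow> k \<le> y" using xi by (meson not_less)
        qed
        have Lk: "(L ^^ k) x = z" using agree[OF RS xS, of k L, folded D_def] xi xz by simp
        have "(L ^^ m) x = (L ^^ (m - k)) z" using split[of k L x] km Lk by simp
        moreover have "(R ^^ m) x = (R ^^ (m - k)) z" using split[of k R x] km xz by simp
        ultimately have "x \<in> A" using ez xS A_def by simp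
        moreover have "h x = p" unfolding h_def p using fk xz by simp
        ultimately show "p \<in> h ` A" by blast
      qed
    qed
  qed
  then have "card A = card (Sigma D K)" by (rule bij_betw_same_card)
  also have "\<dots> = (\<Sum>z\<in>D. card (K z))"
    by (rule card_SigmaI[OF fin]) (auto simp: K_def intro: finite_subset[of _ "{..<m}"])
  finally show ?thesis unfolding A_def K_def .
qed

lemma comb_main:
  assumes LS: "L ` S \<subseteq> S" and RS: "R ` S \<subseteq> S" and inj: "inj_on R S"
    and fin: "finite {y\<in>S. L y \<noteq> R y}"
    and bd: "\<forall>n. card {x\<in>S. (L ^^ n) x \<noteq> (R ^^ n) x} \<le> B"
  shows "evper (\<lambda>n. card {x\<in>S. (L ^^ n) x \<noteq> (R ^^ n) x})"
proof -
  define D where "D = {y\<in>S. L y \<noteq> R y}"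
  define Bz where "Bz z = {k. \<exists>x\<in>S. (R ^^ k) x = z \<and> (\<forall>i<k. (R ^^ i) x \<notin> D)}" for z
  define K where "K z m = {k. k \<in> Bz z \<and> k < m \<and> (L ^^ (m - k)) z \<noteq> (R ^^ (m - k)) z}" for z m
  have finD: "finite D" using fin D_def by simp
  have cf: "card {x\<in>S. (L ^^ m) x \<noteq> (R ^^ m) x} = (\<Sum>z\<in>D. card (K z m))" for m
    using count_formula[OF LS RS inj D_def finD, of m] unfolding K_def Bz_def by simp
  have "evper (\<lambda>m. card (K z m))" if z: "z \<in> D" for z
  proof (cases "\<exists>\<beta>. \<forall>k\<in>Bz z. k < \<beta>")
    case True
    then obtain \<beta> where \<beta>: "\<forall>k\<in>Bz z. k < \<beta>" by blast
    have zS: "z \<in> S" using z D_def by simp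
    obtain M p where Mp: "p \<ge> 1" "\<forall>m\<ge>M. ((L ^^ (m + p)) z \<noteq> (R ^^ (m + p)) z) = ((L ^^ m) z \<noteq> (R ^^ m) z)"
      using e_evper[OF LS RS inj fin zS] unfolding evper_def by blast
    have "K z (m + p) = K z m" if m: "m \<ge> \<beta> + M" for m
    proof -
      have "(k \<in> K z (m + p)) = (k \<in> K z m)" for k
      proof (cases "k \<in> Bz z")
        case True
        then have k: "k < \<beta>" using \<beta> by blast
        have "m + p - k = (m - k) + p" using k m by simp
        moreover have "m - k \<ge> M" using k m by simp
        ultimately have "((L ^^ (m + p - k)) z \<noteq> (R ^^ (m + p - k)) z) = ((L ^^ (m - k)) z \<noteq> (R ^^ (m - k)) z)"
          using Mp(2) by simp
        then show ?thesis unfolding K_def using k m True by auto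
      next
        case False then show ?thesis unfolding K_def by simp
      qed
      then show ?thesis by blast
    qed
    then have "\<forall>m\<ge>\<beta> + M. card (K z (m + p)) = card (K z m)" by simp
    then show ?thesis by (rule evperI[OF Mp(1)])
  next
    case False
    have down: "k' \<in> Bz z" if kB: "k \<in> Bz z" and kk: "k' \<le> k" for k k'
    proof -
      obtain x where x: "x \<in> S" "(R ^^ k) x = z" "\<forall>i<k. (R ^^ i) x \<notin> D"
        using kB unfolding Bz_def by blast
      define x' where "x' = (R ^^ (k - k')) x"
      have "x' \<in> S" unfolding x'_def using funpow_in[OF RS x(1)] .
      moreover have "(R ^^ k') x' = z"
      proof -
        have "k = k' + (k - k')" using kk by simp
        then show ?thesis unfolding x'_def using x(2) by (metis funpow_add comp_apply)
      qed
      moreover have "\<forall>i<k'. (R ^^ i) x' \<notin> D"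
      proof (intro allI impI)
        fix i assume i: "i < k'"
        have "(R ^^ i) x' = (R ^^ (i + (k - k'))) x" unfolding x'_def by (simp add: funpow_add)
        moreover have "i + (k - k') < k" using i kk by simp
        ultimately show "(R ^^ i) x' \<notin> D" using x(3) by simp
      qed
      ultimately show ?thesis unfolding Bz_def by blast
    qed
    have allB: "k \<in> Bz z" for k
    proof -
      obtain k' where "k' \<in> Bz z" "k' \<ge> k" using False by (meson not_less)
      then show ?thesis using down by blast
    qed
    have mono: "\<forall>m. card (K z m) \<le> card (K z (Suc m))"
    proof
      fix m
      have "inj_on Suc (K z m)" by simp
      moreover have "Suc ` K z m \<subseteq> K z (Suc m)" unfolding K_def using allB by auto
      moreover have "finite (K z (Suc m))" unfolding K_def by (rule finite_subset[of _ "{..<Suc m}"]) auto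
      ultimately show "card (K z m) \<le> card (K z (Suc m))" by (rule card_inj_on_le)
    qed
    have bdz: "\<forall>m. card (K z m) \<le> B"
    proof
      fix m
      have "card (K z m) \<le> (\<Sum>z\<in>D. card (K z m))" using z finD by (intro member_le_sum) auto
      moreover have "(\<Sum>z\<in>D. card (K z m)) \<le> B" using bd[rule_format, of m] unfolding cf[of m] .
      ultimately show "card (K z m) \<le> B" by (rule order_trans)
    qed
    obtain M where M: "\<forall>m\<ge>M. card (K z m) = card (K z M)" using evconst[OF mono bdz] by blast
    have "\<forall>m\<ge>M. card (K z (m + 1)) = card (K z m)"
    proof (intro allI impI)
      fix m assume m: "m \<ge> M"
      have "card (K z (m + 1)) = card (K z M)" using M m by (meson le_add1 order_trans)
      moreover have "card (K z m) = card (K z M)" using M m by blast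
      ultimately show "card (K z (m + 1)) = card (K z m)" by (rule trans[OF _ sym])
    qed
    then show ?thesis by (rule evperI[rotated]) simp
  qed
  then have ev: "evper (\<lambda>m. \<Sum>z\<in>D. card (K z m))"
    using evper_sum[OF finD, of "\<lambda>z m. card (K z m)"] by blast
  have eq: "(\<lambda>n. card {x\<in>S. (L ^^ n) x \<noteq> (R ^^ n) x}) = (\<lambda>m. \<Sum>z\<in>D. card (K z m))"
    by (intro ext) (rule cf)
  show ?thesis unfolding eq by (rule ev)
qed



definition leftg :: "(real \<Rightarrow> real) \<Rightarrow> real \<Rightarrow> real \<Rightarrow> bool" where
  "leftg g x y \<longleftrightarrow> (\<exists>e>0. \<forall>s. 0 < s \<and> s < e \<longrightarrow> g (frac (x - s)) = frac (y - s))"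

definition rightg :: "(real \<Rightarrow> real) \<Rightarrow> real \<Rightarrow> real \<Rightarrow> bool" where
  "rightg g x y \<longleftrightarrow> (\<exists>e>0. \<forall>s. 0 \<le> s \<and> s < e \<longrightarrow> g (frac (x + s)) = frac (y + s))"

lemma leftg_comp:
  assumes "leftg g x y" "leftg h y w" shows "leftg (\<lambda>t. h (g t)) x w"
proof -
  obtain e1 where e1: "e1 > 0" "\<forall>s. 0 < s \<and> s < e1 \<longrightarrow> g (frac (x - s)) = frac (y - s)"
    using assms(1) leftg_def by blast
  obtain e2 where e2: "e2 > 0" "\<forall>s. 0 < s \<and> s < e2 \<longrightarrow> h (frac (y - s)) = frac (w - s)"
    using assms(2) leftg_def by blast
  have "\<forall>s. 0 < s \<and> s < min e1 e2 \<longrightarrow> h (g (frac (x - s))) = frac (w - s)"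
    using e1 e2 by simp
  then show ?thesis unfolding leftg_def using e1(1) e2(1) by (intro exI[of _ "min e1 e2"]) simp
qed

lemma rightg_comp:
  assumes "rightg g x y" "rightg h y w" shows "rightg (\<lambda>t. h (g t)) x w"
proof -
  obtain e1 where e1: "e1 > 0" "\<forall>s. 0 \<le> s \<and> s < e1 \<longrightarrow> g (frac (x + s)) = frac (y + s)"
    using assms(1) rightg_def by blast
  obtain e2 where e2: "e2 > 0" "\<forall>s. 0 \<le> s \<and> s < e2 \<longrightarrow> h (frac (y + s)) = frac (w + s)"
    using assms(2) rightg_def by blast
  have "\<forall>s. 0 \<le> s \<and> s < min e1 e2 \<longrightarrow> h (g (frac (x + s))) = frac (w + s)"
    using e1 e2 by simp
  then show ?thesis unfolding rightg_def using e1(1) e2(1) by (intro exI[of _ "min e1 e2"]) simp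
qed

lemma leftg_iter:
  assumes L: "\<forall>x\<in>S. L x \<in> S \<and> leftg f x (L x)" and x: "x \<in> S"
  shows "leftg (f ^^ n) x ((L ^^ n) x)"
  using x
proof (induction n arbitrary: x)
  case 0
  show ?case unfolding leftg_def by (intro exI[of _ 1]) simp
next
  case (Suc n)
  have "leftg f x (L x)" "L x \<in> S" using L Suc.prems by auto
  then have "leftg (\<lambda>t. (f ^^ n) (f t)) x ((L ^^ n) (L x))"
    using Suc.IH leftg_comp by blast
  moreover have e2: "(\<lambda>t. (f ^^ n) (f t)) = f ^^ Suc n" by (simp only: funpow_Suc_right comp_def)
  moreover have e3: "(L ^^ n) (L x) = (L ^^ Suc n) x" by (simp only: funpow_Suc_right comp_apply)
  ultimately show ?case by (simp only: e2 e3)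
qed

lemma rightg_iter:
  assumes R: "\<forall>x\<in>S. f x \<in> S \<and> rightg f x (f x)" and x: "x \<in> S"
  shows "rightg (f ^^ n) x ((f ^^ n) x)"
  using x
proof (induction n arbitrary: x)
  case 0
  show ?case unfolding rightg_def by (intro exI[of _ 1]) simp
next
  case (Suc n)
  have "rightg f x (f x)" "f x \<in> S" using R Suc.prems by auto
  then have "rightg (\<lambda>t. (f ^^ n) (f t)) x ((f ^^ n) (f x))"
    using Suc.IH rightg_comp by blast
  moreover have e2: "(\<lambda>t. (f ^^ n) (f t)) = f ^^ Suc n" by (simp only: funpow_Suc_right comp_def)
  moreover have e3: "(f ^^ n) (f x) = (f ^^ Suc n) x" by (simp only: funpow_Suc_right comp_apply)
  ultimately show ?case by (simp only: e2 e3)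
qed

lemma cis_frac: "cis (2 * pi * frac u) = cis (2 * pi * u)"
proof -
  have "2 * pi * frac u = 2 * pi * u - 2 * pi * of_int \<lfloor>u\<rfloor>" by (simp add: frac_def algebra_simps)
  then have "cis (2 * pi * frac u) = cis (2 * pi * u) / cis (2 * pi * of_int \<lfloor>u\<rfloor>)"
    by (simp only: cis_divide)
  also have "cis (2 * pi * of_int \<lfloor>u\<rfloor>) = 1" by (rule cis_multiple_2pi) simp
  finally show ?thesis by simp
qed

lemma cis_inj01:
  assumes a: "a \<in> {0..<1}" and b: "b \<in> {0..<1}" and e: "cis (2 * pi * a) = cis (2 * pi * b)"
  shows "a = b"
proof -
  have "cis (2 * pi * (a - b)) = cis (2 * pi * a) / cis (2 * pi * b)"
    by (simp add: cis_divide algebra_simps)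
  also have "\<dots> = 1" using e by simp
  finally have "cos (2 * pi * (a - b)) = 1" by (metis cis.sel(1) one_complex.sel(1))
  then obtain n :: int where n: "2 * pi * (a - b) = of_int n * 2 * pi" using cos_one_2pi_int by blast
  then have "a - b = of_int n" by simp
  moreover have "-1 < a - b" "a - b < 1" using a b by auto
  ultimately have "n = 0" by linarith
  then show ?thesis using \<open>a - b = of_int n\<close> by simp
qed

lemma cont_iff:
  assumes x: "x \<in> {0..<1}" and y: "y \<in> {0..<1}" and w: "w \<in> {0..<1}"
    and lg: "leftg g x y" and rg: "rightg g x w"
  shows "circle_cont_at g x \<longleftrightarrow> y = w"
proof -
  define \<phi> where "\<phi> t = cis (2 * pi * g (frac t))" for t
  obtain e1 where e1: "e1 > 0" "\<forall>s. 0 < s \<and> s < e1 \<longrightarrow> g (frac (x - s)) = frac (y - s)"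
    using lg leftg_def by blast
  obtain e2 where e2: "e2 > 0" "\<forall>s. 0 \<le> s \<and> s < e2 \<longrightarrow> g (frac (x + s)) = frac (w + s)"
    using rg rightg_def by blast
  have left: "\<phi> t = cis (2 * pi * (y - (x - t)))" if "x - e1 < t" "t < x" for t
  proof -
    have "g (frac t) = frac (y - (x - t))" using e1(2)[rule_format, of "x - t"] that by simp
    then show ?thesis unfolding \<phi>_def using cis_frac by simp
  qed
  have right: "\<phi> t = cis (2 * pi * (w + (t - x)))" if "x \<le> t" "t < x + e2" for t
  proof -
    have "g (frac t) = frac (w + (t - x))" using e2(2)[rule_format, of "t - x"] that by simp
    then show ?thesis unfolding \<phi>_def using cis_frac by simp
  qed
  have phix: "\<phi> x = cis (2 * pi * w)" using right[of x] e2(1) by simp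
  show ?thesis
  proof
    assume c: "circle_cont_at g x"
    then have "isCont \<phi> x" unfolding circle_cont_at_def \<phi>_def .
    then have t1: "(\<phi> \<longlongrightarrow> \<phi> x) (at_left x)"
      unfolding isCont_def by (rule tendsto_within_subset) simp
    have ev: "eventually (\<lambda>t. cis (2 * pi * (y - (x - t))) = \<phi> t) (at_left x)"
    proof -
      have "eventually (\<lambda>t. t \<in> {x - e1<..<x}) (at_left x)"
        using eventually_at_left_real[of "x - e1" x] e1(1) by simp
      then show ?thesis by (rule eventually_mono) (use left in auto)
    qed
    have "((\<lambda>t. cis (2 * pi * (y - (x - t)))) \<longlongrightarrow> cis (2 * pi * (y - (x - x)))) (at_left x)"
      by (intro tendsto_intros)
    then have t2: "(\<phi> \<longlongrightarrow> cis (2 * pi * y)) (at_left x)"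
      using ev by (simp add: Lim_transform_eventually)
    have "cis (2 * pi * y) = \<phi> x"
      using tendsto_unique[OF trivial_limit_at_left_real t2 t1] .
    then show "y = w" using cis_inj01[OF y w] phix by simp
  next
    assume yw: "y = w"
    have ev: "eventually (\<lambda>t. \<phi> t = cis (2 * pi * (w + (t - x)))) (nhds x)"
    proof -
      have "\<forall>t. dist t x < min e1 e2 \<longrightarrow> \<phi> t = cis (2 * pi * (w + (t - x)))"
      proof (intro allI impI)
        fix t assume "dist t x < min e1 e2"
        then have d: "\<bar>t - x\<bar> < e1" "\<bar>t - x\<bar> < e2" by (auto simp: dist_real_def)
        show "\<phi> t = cis (2 * pi * (w + (t - x)))"
        proof (cases "t < x")
          case True
          then have "\<phi> t = cis (2 * pi * (y - (x - t)))" using left d by simp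
          then show ?thesis using yw by (simp add: algebra_simps)
        next
          case False
          then show ?thesis using right d by simp
        qed
      qed
      then show ?thesis unfolding eventually_nhds_metric using e1(1) e2(1)
        by (intro exI[of _ "min e1 e2"]) simp
    qed
    have "isCont (\<lambda>t. cis (2 * pi * (w + (t - x)))) x" unfolding isCont_def by (intro tendsto_intros)
    then have "isCont \<phi> x" using isCont_cong[OF ev] by simp
    then show "circle_cont_at g x" unfolding circle_cont_at_def \<phi>_def .
  qed
qed


lemma left_nonend:
  assumes bij: "bij_betw f {0..<1} {0..<1}"
    and PU: "\<Union>P = {0..<1::real}"
    and Pint: "\<forall>I\<in>P. \<exists>a b. 0 \<le> a \<and> a < b \<and> b \<le> 1 \<and> I = {a..<b}"
    and Ptr: "\<forall>I\<in>P. \<exists>c. \<forall>x\<in>I. f x = x + c"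
    and x: "x \<in> {0..<1}" and ne: "x \<notin> Inf ` P"
  shows "leftg f x (f x)"
proof -
  obtain I where I: "I \<in> P" "x \<in> I" using x PU by blast
  obtain a b where ab: "0 \<le> a" "a < b" "b \<le> 1" "I = {a..<b}" using Pint I(1) by blast
  obtain c where c: "\<forall>t\<in>I. f t = t + c" using Ptr I(1) by blast
  have "Inf I = a" using ab by simp
  then have "x \<noteq> a" using ne I(1) by blast
  then have ax: "a < x" using I(2) ab(4) by simp
  have "\<forall>s. 0 < s \<and> s < x - a \<longrightarrow> f (frac (x - s)) = frac (f x - s)"
  proof (intro allI impI)
    fix s assume s: "0 < s \<and> s < x - a"
    have xs: "x - s \<in> I" using s I(2) ab(4) by auto
    have xs01: "x - s \<in> {0..<1}" using xs ab by auto
    have "f (x - s) = x - s + c" using c xs by blast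
    moreover have "f x = x + c" using c I(2) by blast
    moreover have "f (x - s) \<in> {0..<1}" using bij xs01 bij_betwE by blast
    ultimately have "frac (f x - s) = f x - s" by (simp add: frac_eq)
    moreover have "frac (x - s) = x - s" using xs01 by (simp add: frac_eq)
    ultimately show "f (frac (x - s)) = frac (f x - s)" using \<open>f (x - s) = x - s + c\<close> \<open>f x = x + c\<close> by simp
  qed
  then show ?thesis unfolding leftg_def using ax by (intro exI[of _ "x - a"]) simp
qed

lemma right_germ:
  assumes bij: "bij_betw f {0..<1} {0..<1}"
    and PU: "\<Union>P = {0..<1::real}"
    and Pint: "\<forall>I\<in>P. \<exists>a b. 0 \<le> a \<and> a < b \<and> b \<le> 1 \<and> I = {a..<b}"
    and Ptr: "\<forall>I\<in>P. \<exists>c. \<forall>x\<in>I. f x = x + c"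
    and x: "x \<in> {0..<1}"
  shows "rightg f x (f x)"
proof -
  obtain I where I: "I \<in> P" "x \<in> I" using x PU by blast
  obtain a b where ab: "0 \<le> a" "a < b" "b \<le> 1" "I = {a..<b}" using Pint I(1) by blast
  obtain c where c: "\<forall>t\<in>I. f t = t + c" using Ptr I(1) by blast
  have xb: "x < b" using I(2) ab(4) by simp
  have "\<forall>s. 0 \<le> s \<and> s < b - x \<longrightarrow> f (frac (x + s)) = frac (f x + s)"
  proof (intro allI impI)
    fix s assume s: "0 \<le> s \<and> s < b - x"
    have xs: "x + s \<in> I" using s I(2) ab(4) by auto
    have xs01: "x + s \<in> {0..<1}" using xs ab by auto
    have "f (x + s) = x + s + c" using c xs by blast
    moreover have "f x = x + c" using c I(2) by blast
    moreover have "f (x + s) \<in> {0..<1}" using bij xs01 bij_betwE by blast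
    ultimately have "frac (f x + s) = f x + s" by (simp add: frac_eq)
    moreover have "frac (x + s) = x + s" using xs01 by (simp add: frac_eq)
    ultimately show "f (frac (x + s)) = frac (f x + s)" using \<open>f (x + s) = x + s + c\<close> \<open>f x = x + c\<close> by simp
  qed
  then show ?thesis unfolding rightg_def using xb by (intro exI[of _ "b - x"]) simp
qed

lemma left_exists:
  assumes bij: "bij_betw f {0..<1} {0..<1}"
    and Pfin: "finite P"
    and PU: "\<Union>P = {0..<1::real}"
    and Pint: "\<forall>I\<in>P. \<exists>a b. 0 \<le> a \<and> a < b \<and> b \<le> 1 \<and> I = {a..<b}"
    and Ptr: "\<forall>I\<in>P. \<exists>c. \<forall>x\<in>I. f x = x + c"
    and x: "x \<in> {0..<1}"
  shows "\<exists>y\<in>{0..<1}. leftg f x y"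
proof -
  define u where "u = (if x = 0 then 1 else x)"
  have u: "0 < u" "u \<le> 1" using x by (auto simp: u_def)
  define E where "E = {e \<in> Inf ` P \<union> Sup ` P. e < u}"
  have finE: "finite E" unfolding E_def using Pfin by simp
  have E0: "0 \<in> E"
  proof -
    have "(0::real) \<in> \<Union>P" using PU by simp
    then obtain I where I: "I \<in> P" "(0::real) \<in> I" by blast
    obtain a b where ab: "0 \<le> a" "a < b" "b \<le> 1" "I = {a..<b}" using Pint I(1) by blast
    have "a = 0" using I(2) ab by simp
    then have "Inf I = 0" using ab by simp
    then show ?thesis unfolding E_def using I(1) u(1) by force
  qed
  define m where "m = Max E"
  have mE: "m \<in> E" unfolding m_def using finE E0 by (intro Max_in) auto
  have mu: "m < u" using mE E_def by simp
  have m0: "0 \<le> m" unfolding m_def using finE E0 by (simp add: Max_ge)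
  define t where "t = (m + u) / 2"
  have t: "m < t" "t < u" using mu by (auto simp: t_def)
  have t01: "t \<in> {0..<1}" using t m0 u by auto
  obtain I where I: "I \<in> P" "t \<in> I" using t01 PU by blast
  obtain a b where ab: "0 \<le> a" "a < b" "b \<le> 1" "I = {a..<b}" using Pint I(1) by blast
  obtain c where c: "\<forall>r\<in>I. f r = r + c" using Ptr I(1) by blast
  have "Inf I = a" "Sup I = b" using ab by simp_all
  have am: "a \<le> m"
  proof -
    have "a \<le> t" using I(2) ab(4) by simp
    then have "a \<in> E" unfolding E_def using \<open>Inf I = a\<close> I(1) t by force
    then show ?thesis unfolding m_def using finE by (simp add: Max_ge)
  qed
  have ub: "u \<le> b"
  proof (rule ccontr)
    assume "\<not> u \<le> b"
    then have "b \<in> E" unfolding E_def using \<open>Sup I = b\<close> I(1) by force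
    then have "b \<le> m" unfolding m_def using finE by (simp add: Max_ge)
    moreover have "t < b" using I(2) ab(4) by simp
    ultimately show False using t by simp
  qed
  define y where "y = frac (u + c)"
  have y01: "y \<in> {0..<1}" unfolding y_def by (simp add: frac_lt_1)
  have "\<forall>s. 0 < s \<and> s < u - m \<longrightarrow> f (frac (x - s)) = frac (y - s)"
  proof (intro allI impI)
    fix s assume s: "0 < s \<and> s < u - m"
    have fx: "frac (x - s) = u - s"
    proof (cases "x = 0")
      case True
      then have "u = 1" by (simp add: u_def)
      have "frac (1 - s) = 1 - s" using s \<open>u = 1\<close> m0 by (simp add: frac_eq)
      moreover have "x - s = (1 - s) + of_int (-1)" using True by simp
      ultimately show ?thesis using \<open>u = 1\<close> by (metis frac_add_of_int_right)
    next
      case False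
      then have "u = x" by (simp add: u_def)
      then show ?thesis using s m0 x by (simp add: frac_eq)
    qed
    have us: "u - s \<in> I" using s am ub ab(4) by auto
    have us01: "u - s \<in> {0..<1}" using us ab by auto
    have fu: "f (u - s) = u - s + c" using c us by blast
    have fu01: "f (u - s) \<in> {0..<1}" using bij us01 bij_betwE by blast
    have "y - s = (u + c - s) + of_int (- \<lfloor>u + c\<rfloor>)" unfolding y_def frac_def by simp
    then have "frac (y - s) = frac (u + c - s)" by (metis frac_add_of_int_right)
    also have "\<dots> = u + c - s" using fu fu01 by (simp add: frac_eq)
    finally show "f (frac (x - s)) = frac (y - s)" using fx fu by simp
  qed
  then have "leftg f x y" unfolding leftg_def using mu by (intro exI[of _ "u - m"]) simp
  then show ?thesis using y01 by blast
qed

lemma leftg_unique: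
  assumes "leftg g x y" "leftg g x y'" "y \<in> {0..<1}" "y' \<in> {0..<1}"
  shows "y = y'"
proof -
  obtain e1 where e1: "e1 > 0" "\<forall>s. 0 < s \<and> s < e1 \<longrightarrow> g (frac (x - s)) = frac (y - s)"
    using assms(1) leftg_def by blast
  obtain e2 where e2: "e2 > 0" "\<forall>s. 0 < s \<and> s < e2 \<longrightarrow> g (frac (x - s)) = frac (y' - s)"
    using assms(2) leftg_def by blast
  define s where "s = min e1 e2 / 2"
  have s: "0 < s" "s < e1" "s < e2" using e1(1) e2(1) by (auto simp: s_def)
  have "frac (y - s) = frac (y' - s)" using e1(2) e2(2) s by metis
  then obtain n where n: "y - s = y' - s + of_int n" by (rule frac_eqE)
  then have "y - y' = of_int n" by simp
  moreover have "-1 < y - y'" "y - y' < 1" using assms(3,4) by auto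
  ultimately have "n = 0" by linarith
  then show ?thesis using n by simp
qed

theorem lemma3p3:
  fixes f :: "real \<Rightarrow> real"
  assumes "iet f"
    and "infinite_order f"
    and "\<exists>B. \<forall>n::nat. disc_count (f ^^ n) \<le> B"
  shows "\<exists>N::nat. N \<ge> 1 \<and> (\<forall>n m::nat. n \<ge> 1 \<longrightarrow> m \<ge> 1 \<longrightarrow>
           disc_count (f ^^ (n * N)) = disc_count (f ^^ (m * N)))"
proof -
  define S where "S = {0..<1::real}"
  obtain P where bij: "bij_betw f S S" and Pfin: "finite P" and PU: "\<Union>P = S"
    and Pint: "\<forall>I\<in>P. \<exists>a b. 0 \<le> a \<and> a < b \<and> b \<le> 1 \<and> I = {a..<b}"
    and Ptr: "\<forall>I\<in>P. \<exists>c. \<forall>x\<in>I. f x = x + c"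
    using assms(1) unfolding iet_def S_def by blast
  define L where "L x = (SOME y. y \<in> S \<and> leftg f x y)" for x
  have Lx: "\<forall>x\<in>S. L x \<in> S \<and> leftg f x (L x)"
  proof
    fix x assume x: "x \<in> S"
    have "\<exists>y. y \<in> S \<and> leftg f x y"
      using left_exists[OF bij[unfolded S_def] Pfin PU[unfolded S_def] Pint Ptr x[unfolded S_def]]
      unfolding S_def by blast
    then show "L x \<in> S \<and> leftg f x (L x)" unfolding L_def by (rule someI_ex)
  qed
  have fS: "f ` S \<subseteq> S" using bij bij_betw_imp_surj_on by blast
  have injf: "inj_on f S" using bij bij_betw_imp_inj_on by blast
  have LS: "L ` S \<subseteq> S" using Lx by blast
  have Rx: "\<forall>x\<in>S. f x \<in> S \<and> rightg f x (f x)"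
    using right_germ[OF bij[unfolded S_def] PU[unfolded S_def] Pint Ptr] fS unfolding S_def by blast
  have finD: "finite {y\<in>S. L y \<noteq> f y}"
  proof (rule finite_subset[of _ "Inf ` P"])
    show "{y\<in>S. L y \<noteq> f y} \<subseteq> Inf ` P"
    proof
      fix y assume y: "y \<in> {y\<in>S. L y \<noteq> f y}"
      show "y \<in> Inf ` P"
      proof (rule ccontr)
        assume ne: "y \<notin> Inf ` P"
        have "leftg f y (f y)"
          using left_nonend[OF bij[unfolded S_def] PU[unfolded S_def] Pint Ptr _ ne] y unfolding S_def by blast
        moreover have "leftg f y (L y)" "L y \<in> S" using Lx y by auto
        moreover have "f y \<in> S" using fS y by blast
        ultimately have "L y = f y" using leftg_unique unfolding S_def by blast
        then show False using y by simp
      qed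
    qed
    show "finite (Inf ` P)" using Pfin by simp
  qed
  have dc: "disc_count (f ^^ n) = card {x\<in>S. (L ^^ n) x \<noteq> (f ^^ n) x}" for n
  proof -
    have "circle_cont_at (f ^^ n) x \<longleftrightarrow> (L ^^ n) x = (f ^^ n) x" if x: "x \<in> S" for x
    proof (rule cont_iff)
      show "x \<in> {0..<1}" using x S_def by simp
      show "(L ^^ n) x \<in> {0..<1}" using funpow_in[OF LS x] S_def by simp
      show "(f ^^ n) x \<in> {0..<1}" using funpow_in[OF fS x] S_def by simp
      show "leftg (f ^^ n) x ((L ^^ n) x)" using leftg_iter[OF Lx x] .
      show "rightg (f ^^ n) x ((f ^^ n) x)" using rightg_iter[OF Rx x] .
    qed
    then have "{x \<in> {0..<1}. \<not> circle_cont_at (f ^^ n) x} = {x\<in>S. (L ^^ n) x \<noteq> (f ^^ n) x}"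
      unfolding S_def by auto
    then show ?thesis unfolding disc_count_def by simp
  qed
  obtain B where B: "\<forall>n::nat. disc_count (f ^^ n) \<le> B" using assms(3) by blast
  have bd: "\<forall>n. card {x\<in>S. (L ^^ n) x \<noteq> (f ^^ n) x} \<le> B" using B dc by simp
  have ev: "evper (\<lambda>n. card {x\<in>S. (L ^^ n) x \<noteq> (f ^^ n) x})"
    by (rule comb_main[OF LS fS injf finD bd])
  obtain N where N: "N \<ge> 1" "\<forall>n\<ge>1. card {x\<in>S. (L ^^ (n * N)) x \<noteq> (f ^^ (n * N)) x} =
      card {x\<in>S. (L ^^ N) x \<noteq> (f ^^ N) x}"
    using evper_final[OF ev] by blast
  have "disc_count (f ^^ (n * N)) = disc_count (f ^^ (m * N))" if "n \<ge> 1" "m \<ge> 1" for n m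
  proof -
    have "disc_count (f ^^ (n * N)) = card {x\<in>S. (L ^^ N) x \<noteq> (f ^^ N) x}"
      unfolding dc using N(2) that(1) by blast
    moreover have "disc_count (f ^^ (m * N)) = card {x\<in>S. (L ^^ N) x \<noteq> (f ^^ N) x}"
      unfolding dc using N(2) that(2) by blast
    ultimately show ?thesis by simp
  qed
  then show ?thesis using N(1) by blast
qed

end
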